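(* Let $(G_n)$ be a sequence of graphs with $\min_{v\in V}\delta_v=\omega(\log n)$, let $k\ge3$ be odd and $p_k^\star<p\le1$, and run the $(k,p,\mathcal B)$-Edge-Majority dynamics from the configuration in which every node is $\mathcal R$. Then for every $\gamma>0$ there exists a constant $T=T(p,k,\gamma)$ such that $$\Pr\big(\exists t\le T:\ \phi^{(t)}_{\max}\le\gamma\big)=1-o(1).$$
   Context: $G_n=(V,E)$, $V=\{1,\dots,n\}$, $N(u)$ neighbourhood, $\delta_u=|N(u)|$; asymptotics as $n\to\infty$. States in $\{\mathcal R,\mathcal B\}$; $R^{(t)}$ the $\mathcal R$ nodes at round $t$; $\phi_u^{(t)}=|N(u)\cap R^{(t)}|/\delta_u$, $\phi^{(t)}_{\max}=\max_u\phi_u^{(t)}$. $(k,p,\mathcal B)$-Edge-Majority: in each round $t\ge1$ every node $u$ independently samples $k$ neighbours uniformly with replacement; for each sampled $v$, independently, $u$ sees $v$ as $\mathcal B$ with probability $p$ and otherwise sees $v$'s true state at round $t-1$; $u$ adopts the state seen more often. $F_{p,k}(x)=\Pr[\mathrm{Bin}(k,(1-p)x)\ge(k+1)/2]$. $p_k^\star\in[1/9,1/2)$ is the (unique) value such that for $0\le p<p_k^\star$, $F_{p,k}(x)=x$ on $[0,1]$ has exactly three solutions, for $p=p_k^\star$ exactly two, and for $p>p_k^\star$ only $0$. *)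

theory Defs
  imports "HOL-Probability.Probability"
begin

text \<open>A sequence of graphs: G n u v means u,v adjacent in G_n, vertex set V_n = {1..n}.
  Configurations are maps nat => bool, True meaning state R, False meaning state B.\<close>

definition verts :: "nat \<Rightarrow> nat set" where
  "verts n = {1..n}"

definition nbrs :: "(nat \<Rightarrow> nat \<Rightarrow> nat \<Rightarrow> bool) \<Rightarrow> nat \<Rightarrow> nat \<Rightarrow> nat set" where
  "nbrs G n u = {v \<in> verts n. G n u v}"

definition deg :: "(nat \<Rightarrow> nat \<Rightarrow> nat \<Rightarrow> bool) \<Rightarrow> nat \<Rightarrow> nat \<Rightarrow> nat" where
  "deg G n u = card (nbrs G n u)"

definition min_deg :: "(nat \<Rightarrow> nat \<Rightarrow> nat \<Rightarrow> bool) \<Rightarrow> nat \<Rightarrow> nat" where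
  "min_deg G n = Min (deg G n ` verts n)"

definition simple_graph_seq :: "(nat \<Rightarrow> nat \<Rightarrow> nat \<Rightarrow> bool) \<Rightarrow> bool" where
  "simple_graph_seq G \<longleftrightarrow> (\<forall>n u v. G n u v = G n v u) \<and> (\<forall>n u. \<not> G n u u)"

definition phi :: "(nat \<Rightarrow> nat \<Rightarrow> nat \<Rightarrow> bool) \<Rightarrow> nat \<Rightarrow> (nat \<Rightarrow> bool) \<Rightarrow> nat \<Rightarrow> real" where
  "phi G n \<sigma> u = real (card (nbrs G n u \<inter> {v. \<sigma> v})) / real (deg G n u)"

definition phi_max :: "(nat \<Rightarrow> nat \<Rightarrow> nat \<Rightarrow> bool) \<Rightarrow> nat \<Rightarrow> (nat \<Rightarrow> bool) \<Rightarrow> real" where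
  "phi_max G n \<sigma> = Max (phi G n \<sigma> ` verts n)"

definition sample_view :: "(nat \<Rightarrow> nat \<Rightarrow> nat \<Rightarrow> bool) \<Rightarrow> nat \<Rightarrow> real \<Rightarrow> (nat \<Rightarrow> bool) \<Rightarrow> nat \<Rightarrow> bool pmf" where
  "sample_view G n p \<sigma> u =
     do { v \<leftarrow> pmf_of_set (nbrs G n u);
          b \<leftarrow> bernoulli_pmf p;
          return_pmf (if b then False else \<sigma> v) }"

definition node_update :: "(nat \<Rightarrow> nat \<Rightarrow> nat \<Rightarrow> bool) \<Rightarrow> nat \<Rightarrow> nat \<Rightarrow> real \<Rightarrow> (nat \<Rightarrow> bool) \<Rightarrow> nat \<Rightarrow> bool pmf" where
  "node_update G n k p \<sigma> u =
     do { views \<leftarrow> replicate_pmf k (sample_view G n p \<sigma> u);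
          return_pmf (count_list views True > count_list views False) }"

definition em_step :: "(nat \<Rightarrow> nat \<Rightarrow> nat \<Rightarrow> bool) \<Rightarrow> nat \<Rightarrow> nat \<Rightarrow> real \<Rightarrow> (nat \<Rightarrow> bool) \<Rightarrow> (nat \<Rightarrow> bool) pmf" where
  "em_step G n k p \<sigma> = Pi_pmf (verts n) False (node_update G n k p \<sigma>)"

fun em_traj :: "(nat \<Rightarrow> nat \<Rightarrow> nat \<Rightarrow> bool) \<Rightarrow> nat \<Rightarrow> nat \<Rightarrow> real \<Rightarrow> nat \<Rightarrow> (nat \<Rightarrow> bool) list pmf" where
  "em_traj G n k p 0 = return_pmf [(\<lambda>u. u \<in> verts n)]"
| "em_traj G n k p (Suc t) =
     do { xs \<leftarrow> em_traj G n k p t;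
          \<sigma> \<leftarrow> em_step G n k p (last xs);
          return_pmf (xs @ [\<sigma>]) }"

definition F :: "real \<Rightarrow> nat \<Rightarrow> real \<Rightarrow> real" where
  "F p k x = (\<Sum>i\<in>{i. i \<le> k \<and> real i \<ge> (real k + 1) / 2}.
                real (k choose i) * ((1 - p) * x) ^ i * (1 - (1 - p) * x) ^ (k - i))"

definition fixpoints :: "real \<Rightarrow> nat \<Rightarrow> real set" where
  "fixpoints p k = {x \<in> {0..1}. F p k x = x}"

definition p_star :: "nat \<Rightarrow> real" where
  "p_star k = (THE q. 1/9 \<le> q \<and> q < 1/2 \<and>
       (\<forall>p. 0 \<le> p \<and> p < q \<longrightarrow> card (fixpoints p k) = 3) \<and>
       card (fixpoints q k) = 2 \<and>
       (\<forall>p. q < p \<and> p \<le> 1 \<longrightarrow> fixpoints p k = {0}))"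

end

theory Submission
  imports Defs
begin


definition Gh :: "nat \<Rightarrow> real \<Rightarrow> real" where
  "Gh h y = (\<Sum>i=Suc h..2*h+1. Bernstein (2*h+1) i y)"

lemma F_eq_Gh:
  assumes "k = 2*h+1"
  shows "F p k x = Gh h ((1-p)*x)"
proof -
  have S: "{i. i \<le> 2*h+1 \<and> real i \<ge> (real (2*h+1) + 1)/2} = {Suc h..2*h+1}"
    by auto
  show ?thesis unfolding F_def Gh_def Bernstein_def assms by (simp only: S)
qed

lemma Bern_deriv:
  assumes "1 \<le> i" "i \<le> n"
  shows "((Bernstein n i) has_real_derivative
           (real n * (Bernstein (n-1) (i-1) y - Bernstein (n-1) i y))) (at y)"
proof -
  have d: "((\<lambda>y. real (n choose i) * y^i * (1-y)^(n-i)) has_real_derivative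
        real (n choose i) * (real i * y^(i-1) * (1-y)^(n-i) - y^i * (real (n-i) * (1-y)^(n-i-1))) ) (at y)"
    by (auto intro!: derivative_eq_intros simp: algebra_simps)
  have e1: "real (n choose i) * real i = real n * real ((n-1) choose (i-1))"
    using binomial_absorption[of "i-1" n] assms by (metis Suc_diff_le diff_Suc_1 le_add_diff_inverse2 of_nat_mult mult.commute plus_1_eq_Suc)
  have e2: "real (n choose i) * real (n-i) = real n * real ((n-1) choose i)"
    using binomial_absorb_comp[of n i] by (metis of_nat_mult mult.commute)
  have "real (n choose i) * (real i * y^(i-1) * (1-y)^(n-i) - y^i * (real (n-i) * (1-y)^(n-i-1)))
     = (real (n choose i) * real i) * y^(i-1) * (1-y)^(n-i) - (real (n choose i) * real (n-i)) * y^i * (1-y)^(n-i-1)"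
    by (simp add: algebra_simps)
  also have "\<dots> = real n * (Bernstein (n-1) (i-1) y - Bernstein (n-1) i y)"
  proof (cases "i = n")
    case True
    then show ?thesis using e1 assms by (simp add: Bernstein_def)
  next
    case False
    have "n - 1 - (i - 1) = n - i" "n - 1 - i = n - i - 1" using assms by auto
    then show ?thesis unfolding e1 e2 Bernstein_def by (simp add: algebra_simps)
  qed
  finally show ?thesis using d unfolding Bernstein_def[abs_def] by simp
qed

lemma Gh_deriv:
  "(Gh h has_real_derivative (real (2*h+1) * real (2*h choose h) * (y*(1-y))^h)) (at y)"
proof -
  let ?n = "2*h+1"
  let ?f = "\<lambda>j. Bernstein (2*h) j y"
  have D: "(Gh h has_real_derivative
          (\<Sum>i=Suc h..2*h+1. real ?n * (Bernstein (?n-1) (i-1) y - Bernstein (?n-1) i y))) (at y)"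
    unfolding Gh_def[abs_def] by (rule DERIV_sum, rule Bern_deriv) auto
  have "(\<Sum>i=Suc h..2*h+1. real ?n * (Bernstein (?n-1) (i-1) y - Bernstein (?n-1) i y))
      = real ?n * (\<Sum>i=Suc h..Suc (2*h). ?f (i-1) - ?f i)"
    by (simp add: sum_distrib_left del: sum.cl_ivl_Suc)
  also have "(\<Sum>i=Suc h..Suc (2*h). ?f (i-1) - ?f i) = (\<Sum>j=h..2*h. ?f j - ?f (Suc j))"
    by (subst sum.shift_bounds_cl_Suc_ivl) simp
  also have "(\<Sum>j=h..2*h. ?f j - ?f (Suc j)) = - (\<Sum>j=h..2*h. ?f (Suc j) - ?f j)"
    by (simp add: sum_negf[symmetric])
  also have "(\<Sum>j=h..2*h. ?f (Suc j) - ?f j) = ?f (Suc (2*h)) - ?f h"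
    by (rule sum_Suc_diff) simp
  also have "?f (Suc (2*h)) = 0" by (simp add: Bernstein_def)
  also have "?f h = real (2*h choose h) * (y*(1-y))^h"
    by (simp add: Bernstein_def power_mult_distrib mult_2)
  finally have E: "(\<Sum>i=Suc h..2*h+1. real ?n * (Bernstein (?n-1) (i-1) y - Bernstein (?n-1) i y))
     = real (2*h+1) * real (2*h choose h) * (y*(1-y))^h" by simp
  show ?thesis using D unfolding E .
qed

lemma Gh_0: "Gh h 0 = 0"
  unfolding Gh_def Bernstein_def by simp

lemma Gh_1: "Gh h 1 = 1"
proof -
  have "Gh h 1 = (\<Sum>i=Suc h..2*h+1. if i = 2*h+1 then 1 else 0)"
    unfolding Gh_def Bernstein_def by (intro sum.cong) auto
  then show ?thesis by simp
qed

lemma Gh_nonneg: "0 \<le> y \<Longrightarrow> y \<le> 1 \<Longrightarrow> 0 \<le> Gh h y"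
  unfolding Gh_def by (intro sum_nonneg Bernstein_nonneg) auto

lemma Gh_le1: assumes "0 \<le> y" "y \<le> 1" shows "Gh h y \<le> 1"
proof -
  have "Gh h y \<le> (\<Sum>i\<le>2*h+1. Bernstein (2*h+1) i y)"
    unfolding Gh_def by (intro sum_mono2) (auto intro!: Bernstein_nonneg simp: assms)
  then show ?thesis by simp
qed

lemma Gh_pos: assumes "0 < y" "y \<le> 1" shows "0 < Gh h y"
proof -
  have "Bernstein (2*h+1) (2*h+1) y \<le> Gh h y"
    unfolding Gh_def by (rule member_le_sum) (auto intro!: Bernstein_nonneg simp: assms(2) less_imp_le[OF assms(1)])
  moreover have "Bernstein (2*h+1) (2*h+1) y > 0" using assms by (simp add: Bernstein_def)
  ultimately show ?thesis by linarith
qed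

lemma Gh_markov: assumes "0 \<le> y" "y \<le> 1" shows "Gh h y \<le> real (2*h+1) * y / real (h+1)"
proof -
  have "Gh h y \<le> (\<Sum>i=Suc h..2*h+1. real i / real (h+1) * Bernstein (2*h+1) i y)"
    unfolding Gh_def
  proof (intro sum_mono)
    fix i assume "i \<in> {Suc h..2*h+1}"
    then have "1 \<le> real i / real (h+1)" by (auto simp: field_simps)
    moreover have "0 \<le> Bernstein (2*h+1) i y" using assms by (intro Bernstein_nonneg)
    ultimately show "Bernstein (2*h+1) i y \<le> real i / real (h+1) * Bernstein (2*h+1) i y"
      using mult_right_mono[of 1 "real i / real (h+1)" "Bernstein (2*h+1) i y"] by simp
  qed
  also have "\<dots> \<le> (\<Sum>i\<le>2*h+1. real i / real (h+1) * Bernstein (2*h+1) i y)"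
    by (intro sum_mono2) (auto intro!: Bernstein_nonneg mult_nonneg_nonneg divide_nonneg_nonneg simp: assms)
  also have "\<dots> = (\<Sum>i\<le>2*h+1. real i * Bernstein (2*h+1) i y) / real (h+1)"
    by (simp only: sum_divide_distrib) (intro sum.cong, auto)
  finally show ?thesis unfolding sum_k_Bernstein .
qed

definition cA :: "nat \<Rightarrow> real" where "cA h = real (2*h+1) * real (2*h choose h)"

lemma cA_pos: "cA h > 0" unfolding cA_def by simp

definition Nf :: "nat \<Rightarrow> real \<Rightarrow> real" where
  "Nf h y = y * (cA h * (y*(1-y))^h) - Gh h y"

lemma Gh_deriv': "(Gh h has_real_derivative (cA h * (y*(1-y))^h)) (at y)"
  using Gh_deriv[of h y] unfolding cA_def by (simp add: mult.assoc)

lemma Nf_deriv: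
  assumes "h \<ge> 1"
  shows "(Nf h has_real_derivative (y * cA h * real h * (y*(1-y))^(h-1) * (1 - 2*y))) (at y)"
proof -
  have "((\<lambda>y. y * (cA h * (y*(1-y))^h) - Gh h y) has_real_derivative
     (1 * (cA h * (y*(1-y))^h) + y * (cA h * (real h * (y*(1-y))^(h-1) * (1*(1-y) + y*(0-1)))) - cA h * (y*(1-y))^h)) (at y)"
    by (rule derivative_intros Gh_deriv')+ (auto intro!: derivative_eq_intros Gh_deriv')
  moreover have "(1 * (cA h * (y*(1-y))^h) + y * (cA h * (real h * (y*(1-y))^(h-1) * (1*(1-y) + y*(0-1)))) - cA h * (y*(1-y))^h)
     = y * cA h * real h * (y*(1-y))^(h-1) * (1 - 2*y)" by (simp add: algebra_simps)
  ultimately show ?thesis unfolding Nf_def[abs_def] by (simp only: mult.assoc)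
qed

lemma Nf_cont: "h \<ge> 1 \<Longrightarrow> continuous_on A (Nf h)"
  using Nf_deriv by (meson DERIV_isCont continuous_at_imp_continuous_on)

lemma Nf_0: "Nf h 0 = 0" unfolding Nf_def by (simp add: Gh_0)
lemma Nf_1: "h \<ge> 1 \<Longrightarrow> Nf h 1 = -1" unfolding Nf_def by (simp add: Gh_1)

lemma Nf_inc:
  assumes "h \<ge> 1" "0 \<le> a" "a < b" "b \<le> 1/2"
  shows "Nf h a < Nf h b"
proof (rule DERIV_pos_imp_increasing_open[OF assms(3) _ Nf_cont[OF assms(1)]])
  fix x assume x: "a < x" "x < b"
  have "0 < x * cA h * real h * (x*(1-x))^(h-1) * (1 - 2*x)"
    using x assms cA_pos by (intro mult_pos_pos zero_less_power) auto
  then show "\<exists>y. (Nf h has_real_derivative y) (at x) \<and> 0 < y"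
    using Nf_deriv[OF assms(1)] by blast
qed

lemma Nf_dec:
  assumes "h \<ge> 1" "1/2 \<le> a" "a < b" "b \<le> 1"
  shows "Nf h b < Nf h a"
proof (rule DERIV_neg_imp_decreasing_open[OF assms(3) _ Nf_cont[OF assms(1)]])
  fix x assume x: "a < x" "x < b"
  have "0 < x * cA h * real h * (x*(1-x))^(h-1) * (2*x - 1)"
    using x assms cA_pos by (intro mult_pos_pos zero_less_power) auto
  then have "x * cA h * real h * (x*(1-x))^(h-1) * (1 - 2*x) < 0"
    by (simp add: algebra_simps)
  then show "\<exists>y. (Nf h has_real_derivative y) (at x) \<and> y < 0"
    using Nf_deriv[OF assms(1)] by blast
qed

lemma Nf_root:
  assumes "h \<ge> 1"
  obtains y0 where "1/2 < y0" "y0 < 1" "\<And>y. 0 < y \<Longrightarrow> y < y0 \<Longrightarrow> Nf h y > 0"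
    "\<And>y. y0 < y \<Longrightarrow> y \<le> 1 \<Longrightarrow> Nf h y < 0"
proof -
  have half: "Nf h (1/2) > 0" using Nf_inc[OF assms, of 0 "1/2"] Nf_0 by simp
  have "Nf h 1 \<le> 0" "0 \<le> Nf h (1/2)" using Nf_1[OF assms] half by auto
  then obtain y0 where y0: "1/2 \<le> y0" "y0 \<le> 1" "Nf h y0 = 0"
    using IVT2'[of "Nf h" 1 0 "1/2"] Nf_cont[OF assms] by auto
  have "y0 \<noteq> 1/2"
  proof
    assume a: "y0 = 1/2"
    have "Nf h (1/2) = 0" using y0(3) unfolding a .
    then show False using half by simp
  qed
  moreover have "y0 \<noteq> 1" using y0 Nf_1[OF assms] by auto
  ultimately have y0': "1/2 < y0" "y0 < 1" using y0(1,2) by auto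
  show ?thesis
  proof (rule that[OF y0'])
    fix y assume "0 < y" "y < y0"
    show "Nf h y > 0"
    proof (cases "y \<le> 1/2")
      case True then show ?thesis using Nf_inc[OF assms, of 0 y] Nf_0 \<open>0 < y\<close> by simp
    next
      case False then show ?thesis using Nf_dec[OF assms, of y y0] y0 \<open>y < y0\<close> by simp
    qed
  next
    fix y assume "y0 < y" "y \<le> 1"
    then show "Nf h y < 0" using Nf_dec[OF assms, of y0 y] y0 y0' by simp
  qed
qed

definition Hp :: "nat \<Rightarrow> real \<Rightarrow> real" where
  "Hp h y = (\<Sum>i=Suc h..2*h+1. real (2*h+1 choose i) * y^(i-1) * (1-y)^(2*h+1-i))"

lemma Gh_Hp: "Gh h y = y * Hp h y"
  unfolding Gh_def Hp_def Bernstein_def sum_distrib_left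
  by (intro sum.cong refl) (auto simp: algebra_simps power_eq_if)

lemma Hp_cont: "continuous_on A (Hp h)"
  unfolding Hp_def by (intro continuous_intros)

lemma Hp_0: "h \<ge> 1 \<Longrightarrow> Hp h 0 = 0"
  unfolding Hp_def by (intro sum.neutral) auto

lemma Hp_1: "Hp h 1 = 1"
  using Gh_1[of h] Gh_Hp[of h 1] by simp

lemma Hp_eq: "y \<noteq> 0 \<Longrightarrow> Hp h y = Gh h y / y"
  using Gh_Hp[of h y] by simp

lemma Hq_deriv:
  assumes "y \<noteq> 0"
  shows "((\<lambda>y. Gh h y / y) has_real_derivative (Nf h y / y^2)) (at y)"
proof -
  have "((\<lambda>y. Gh h y / y) has_real_derivative ((cA h * (y*(1-y))^h) * y - Gh h y * 1) / (y*y)) (at y)"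
    using assms by (intro derivative_intros Gh_deriv') auto
  moreover have "((cA h * (y*(1-y))^h) * y - Gh h y * 1) / (y*y) = Nf h y / y^2"
    unfolding Nf_def by (simp add: algebra_simps power2_eq_square)
  ultimately show ?thesis by simp
qed

lemma Hp_pos: "0 < y \<Longrightarrow> y \<le> 1 \<Longrightarrow> 0 < Hp h y"
  using Gh_pos[of y h] Hp_eq[of y h] by simp

lemma Hp_shape:
  assumes "h \<ge> 1"
  obtains y0 where "1/2 < y0" "y0 < 1"
    "\<And>a b. 0 \<le> a \<Longrightarrow> a < b \<Longrightarrow> b \<le> y0 \<Longrightarrow> Hp h a < Hp h b"
    "\<And>a b. y0 \<le> a \<Longrightarrow> a < b \<Longrightarrow> b \<le> 1 \<Longrightarrow> Hp h b < Hp h a"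
proof -
  obtain y0 where y0: "1/2 < y0" "y0 < 1" "\<And>y. 0 < y \<Longrightarrow> y < y0 \<Longrightarrow> Nf h y > 0"
    "\<And>y. y0 < y \<Longrightarrow> y \<le> 1 \<Longrightarrow> Nf h y < 0" using Nf_root[OF assms] by blast
  have cq: "continuous_on {a..b} (\<lambda>y. Gh h y / y)" if "0 < a" for a b
  proof -
    have "continuous_on {a..b} (\<lambda>y. Hp h y)" by (rule Hp_cont)
    moreover have "\<And>y. y \<in> {a..b} \<Longrightarrow> Hp h y = Gh h y / y" using that by (intro Hp_eq) auto
    ultimately show ?thesis using continuous_on_cong[of "{a..b}" "{a..b}" "Hp h" "\<lambda>y. Gh h y / y"] by simp
  qed
  show ?thesis
  proof (rule that[OF y0(1,2)])
    fix a b :: real assume ab: "0 \<le> a" "a < b" "b \<le> y0"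
    show "Hp h a < Hp h b"
    proof (cases "a = 0")
      case True then show ?thesis using Hp_0[OF assms] Hp_pos[of b h] ab y0 by simp
    next
      case False
      then have a0: "0 < a" using ab by simp
      have "Gh h a / a < Gh h b / b"
      proof (rule DERIV_pos_imp_increasing_open[OF ab(2) _ cq[OF a0]])
        fix x assume "a < x" "x < b"
        then have p: "0 < Nf h x / x^2" "x \<noteq> 0" using y0(3)[of x] a0 ab by auto
        then show "\<exists>y. ((\<lambda>y. Gh h y / y) has_real_derivative y) (at x) \<and> 0 < y"
          using Hq_deriv[OF p(2), of h] by blast
      qed
      then show ?thesis using Hp_eq a0 ab by simp
    qed
  next
    fix a b :: real assume ab: "y0 \<le> a" "a < b" "b \<le> 1"
    have a0: "0 < a" using ab y0 by simp
    have "Gh h b / b < Gh h a / a"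
    proof (rule DERIV_neg_imp_decreasing_open[OF ab(2) _ cq[OF a0]])
      fix x assume "a < x" "x < b"
      then have p: "Nf h x / x^2 < 0" "x \<noteq> 0" using y0(4)[of x] a0 ab
        by (auto simp: divide_neg_pos)
      then show "\<exists>y. ((\<lambda>y. Gh h y / y) has_real_derivative y) (at x) \<and> y < 0"
        using Hq_deriv[OF p(2), of h] by blast
    qed
    then show "Hp h b < Hp h a" using Hp_eq a0 ab by simp
  qed
qed

lemma binom_sym1: "(Suc (2*h) choose Suc h) = (Suc (2*h) choose h)"
  using binomial_symmetric[of h "Suc (2*h)"] by simp

lemma binom_id1: "real (2*h+1) * real (2*h choose h) = real (2*h+1 choose h) * real (h+1)"
proof -
  have e: "Suc h * (Suc (2*h) choose h) = Suc (2*h) * (2*h choose h)"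
    using Suc_times_binomial[of h "2*h"] unfolding binom_sym1 .
  show ?thesis by (metis e of_nat_mult mult.commute Suc_eq_plus1)
qed

lemma binom_id2: "real (2*(h+1)+1) * real (2*(h+1) choose (h+1)) = real (2*h+1 choose h) * real (4*h+6)"
proof -
  have e: "(Suc (Suc (2*h)) choose Suc h) = 2 * (Suc (2*h) choose h)"
    using binomial_Suc_Suc[of "Suc (2*h)" h] unfolding binom_sym1 by simp
  have t2: "h+1 = Suc h" by simp
  have t1: "2 * Suc h = Suc (Suc (2*h))" by simp
  have e': "(2*(h+1) choose (h+1)) = 2 * (2*h+1 choose h)"
    unfolding t2 t1 e by simp
  define C where "C = (2*h+1 choose h)"
  have "real (2*(h+1)+1) * real (2*(h+1) choose (h+1)) = real (2*h+3) * (2 * real C)"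
    unfolding e' C_def by simp
  also have "\<dots> = real C * real (4*h+6)" by (simp add: algebra_simps)
  finally show ?thesis unfolding C_def .
qed

lemma Gh_step: "Gh (h+1) y - Gh h y = real (2*h+1 choose h) * (y*(1-y))^(h+1) * (2*y-1)"
proof -
  define C where "C = real (2*h+1 choose h)"
  define E where "E = (\<lambda>y. Gh (h+1) y - Gh h y - C * (y*(1-y))^(h+1) * (2*y-1))"
  have "(E has_real_derivative 0) (at x)" for x
  proof -
    define w where "w = (x*(1-x))^h"
    have c1: "cA h = C * real (h+1)" unfolding cA_def C_def by (rule binom_id1)
    have c2: "cA (h+1) = C * real (4*h+6)" unfolding cA_def C_def by (rule binom_id2)
    have d: "(E has_real_derivative 
       (cA (h+1) * (x*(1-x))^(h+1) - cA h * (x*(1-x))^h - ((C * (x*(1-x))^(h+1)) * (2*1 - 0) + (C * (of_nat (h+1) * ((x*(0-1) + 1*(1-x)) * (x*(1-x))^(h+1 - Suc 0)))) * (2*x-1)))) (at x)"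
      unfolding E_def
      by (intro DERIV_diff DERIV_cmult DERIV_mult' DERIV_power Gh_deriv' DERIV_ident DERIV_const)
    have p1: "(x*(1-x))^(h+1) = x*(1-x)*w" "(x*(1-x))^(h+1-Suc 0) = w" "(x*(1-x))^h = w"
      unfolding w_def by simp_all
    have "cA (h+1) * (x*(1-x))^(h+1) - cA h * (x*(1-x))^h - ((C * (x*(1-x))^(h+1)) * (2*1 - 0) + (C * (of_nat (h+1) * ((x*(0-1) + 1*(1-x)) * (x*(1-x))^(h+1 - Suc 0)))) * (2*x-1))
      = C * w * (real (4*h+6) * (x*(1-x)) - real (h+1) - 2*(x*(1-x)) - real (h+1) * ((1 - 2*x) * (2*x-1)))"
      unfolding c1 c2 p1 by (simp add: algebra_simps)
    also have "\<dots> = 0" by (simp add: algebra_simps)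
    finally show ?thesis using d by simp
  qed
  then have "E y = E 0" using DERIV_isconst_all by blast
  moreover have "E 0 = 0" unfolding E_def by (simp add: Gh_0)
  ultimately show ?thesis unfolding E_def C_def by simp
qed
lemma Gh1_34: "Gh 1 (3/4) = 27/32"
  by (simp add: Gh_def Bernstein_def numeral_eq_Suc)

lemma Gh_34: "h \<ge> 1 \<Longrightarrow> Gh h (3/4) \<ge> 27/32"
proof (induction h rule: dec_induct)
  case base then show ?case using Gh1_34 by simp
next
  case (step h)
  have "0 \<le> real (2*h+1 choose h) * ((3/4)*(1-3/4::real))^(h+1) * (2*(3/4)-1)" by simp
  then have "Gh (h+1) (3/4) \<ge> 27/32" using Gh_step[of h "3/4"] step(3) by linarith
  then show ?case by simp
qed

lemma fixpoints_Gh: "fixpoints p (2*h+1) = {x\<in>{0..1}. Gh h ((1-p)*x) = x}"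
  unfolding fixpoints_def using F_eq_Gh[of "2*h+1" h] by simp

lemma fix_char:
  assumes c: "0 < c" "c \<le> 1" and x: "0 < x" "x \<le> 1"
  shows "Gh h (c*x) = x \<longleftrightarrow> Hp h (c*x) = 1/c"
proof -
  have "Gh h (c*x) = c*x * Hp h (c*x)" by (rule Gh_Hp)
  then show ?thesis using c x by (auto simp: field_simps)
qed

lemma fix_from_root:
  assumes c: "0 < c" "c \<le> 1" and y: "0 < y" "y \<le> 1" "Hp h y = 1/c"
  shows "y/c \<in> {x\<in>{0..1}. Gh h (c*x) = x}"
proof -
  have g: "Gh h y = y/c" using Gh_Hp[of h y] y c by simp
  have "y/c \<le> 1" using Gh_le1[of y h] y g by simp
  moreover have "0 \<le> y/c" using y c by simp
  moreover have "Gh h (c*(y/c)) = y/c" using g c by simp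
  ultimately show ?thesis by simp
qed

lemma fix_analysis:
  assumes h: "h \<ge> 1"
  obtains M where "9/8 \<le> M" "M < 2" "\<forall>y\<in>{0..1}. Gh h y \<le> M*y"
    "\<forall>p. 0 \<le> p \<and> p < 1-1/M \<longrightarrow> card (fixpoints p (2*h+1)) = 3"
    "card (fixpoints (1-1/M) (2*h+1)) = 2"
    "\<forall>p. 1-1/M < p \<and> p \<le> 1 \<longrightarrow> fixpoints p (2*h+1) = {0}"
proof -
  obtain y0 where y0: "1/2 < y0" "y0 < 1"
    and inc: "\<And>a b. 0 \<le> a \<Longrightarrow> a < b \<Longrightarrow> b \<le> y0 \<Longrightarrow> Hp h a < Hp h b"
    and dec: "\<And>a b. y0 \<le> a \<Longrightarrow> a < b \<Longrightarrow> b \<le> 1 \<Longrightarrow> Hp h b < Hp h a"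
    using Hp_shape[OF h] by blast
  define M where "M = Hp h y0"
  have strict: "Hp h y < M" if "0 \<le> y" "y \<le> 1" "y \<noteq> y0" for y
  proof (cases "y < y0")
    case True then show ?thesis using inc[of y y0] that M_def by simp
  next
    case False then show ?thesis using dec[of y0 y] that M_def by simp
  qed
  have le: "Hp h y \<le> M" if "0 \<le> y" "y \<le> 1" for y
    using strict[OF that] M_def by (cases "y = y0") auto
  have M1: "1 < M" using strict[of 1] Hp_1 y0 by simp
  have GM: "\<forall>y\<in>{0..1}. Gh h y \<le> M*y"
  proof
    fix y :: real assume "y \<in> {0..1}"
    then show "Gh h y \<le> M*y" using le[of y] Gh_Hp[of h y] mult_right_mono[of "Hp h y" M y]
      by (simp add: mult.commute)
  qed
  have M98: "9/8 \<le> M"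
  proof -
    have "Hp h (3/4) = Gh h (3/4) / (3/4)" by (rule Hp_eq) simp
    then have "9/8 \<le> Hp h (3/4)" using Gh_34[OF h] by simp
    then show ?thesis using le[of "3/4"] by simp
  qed
  have M2: "M < 2"
  proof -
    have "M = Gh h y0 / y0" unfolding M_def using y0 by (intro Hp_eq) simp
    also have "\<dots> \<le> (real (2*h+1) * y0 / real (h+1)) / y0"
      using Gh_markov[of y0 h] y0 by (intro divide_right_mono) auto
    also have "\<dots> = real (2*h+1) / real (h+1)" using y0 by simp
    also have "\<dots> < 2" by (simp add: field_simps)
    finally show ?thesis .
  qed
  have Mpos: "0 < M" using M1 by simp
  have three: "card (fixpoints p (2*h+1)) = 3" if p: "0 \<le> p" "p < 1-1/M" for p
  proof -
    define c where "c = 1-p"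
    have c: "1/M < c" "c \<le> 1" using p c_def by auto
    have c0: "0 < c" using c Mpos by (meson less_trans divide_pos_pos zero_less_one)
    have L: "1 \<le> 1/c" "1/c < M" using c c0 Mpos by (auto simp: field_simps)
    obtain y1 where y1: "0 \<le> y1" "y1 \<le> y0" "Hp h y1 = 1/c"
      using IVT'[of "Hp h" 0 "1/c" y0] Hp_0[OF h] L y0 Hp_cont M_def c0 by auto
    have y1': "0 < y1" "y1 < y0"
      using y1 Hp_0[OF h] L M_def by (auto simp: less_le) 
    obtain y2 where y2: "y0 \<le> y2" "y2 \<le> 1" "Hp h y2 = 1/c"
      using IVT2'[of "Hp h" 1 "1/c" y0] Hp_1 L y0 Hp_cont M_def by auto
    have y2': "y0 < y2" using y2 L M_def by (auto simp: less_le)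
    have "fixpoints p (2*h+1) = {0, y1/c, y2/c}"
    proof
      show "{0, y1/c, y2/c} \<subseteq> fixpoints p (2*h+1)"
        unfolding fixpoints_Gh c_def[symmetric]
        using fix_from_root[OF c0 c(2) y1'(1) _ y1(3)] fix_from_root[OF c0 c(2) _ y2(2,3)]
          y1' y0 y2' Gh_0 by auto
    next
      show "fixpoints p (2*h+1) \<subseteq> {0, y1/c, y2/c}"
      proof
        fix x assume "x \<in> fixpoints p (2*h+1)"
        then have x: "0 \<le> x" "x \<le> 1" "Gh h (c*x) = x" unfolding fixpoints_Gh c_def by auto
        show "x \<in> {0, y1/c, y2/c}"
        proof (cases "x = 0")
          case False
          then have x0: "0 < x" using x by simp
          have Hy: "Hp h (c*x) = 1/c" using fix_char[OF c0 c(2) x0 x(2)] x(3) by simp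
          have cx: "0 < c*x" "c*x \<le> 1" using c0 c x0 x by (auto intro: mult_le_one)
          have "c*x = y1 \<or> c*x = y2"
          proof (rule ccontr)
            assume ne: "\<not> (c*x = y1 \<or> c*x = y2)"
            have ne1: "c*x \<noteq> y1" "c*x \<noteq> y2" using ne by auto
            consider "c*x < y1" | "y1 < c*x \<and> c*x < y0" | "c*x = y0" | "y0 < c*x \<and> c*x < y2" | "y2 < c*x"
              using ne1 y1' y2' by linarith
            then show False
            proof cases
              case 1 then show ?thesis using inc[of "c*x" y1] cx y1 y1' Hy by simp
            next
              case 2 then show ?thesis using inc[of y1 "c*x"] cx y1 y1' Hy by simp
            next
              case 3 then show ?thesis using Hy L M_def by simp
            next
              case 4 then show ?thesis using dec[of "c*x" y2] cx y2 y2' Hy by simp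
            next
              case 5 then show ?thesis using dec[of y2 "c*x"] cx y2 y2' Hy by simp
            qed
          qed
          then show ?thesis using c0 by (auto simp: field_simps)
        qed simp
      qed
    qed
    moreover have "0 < y1/c" "y1/c < y2/c" using y1' y2' y0 c0 by (auto simp: divide_strict_right_mono)
    then have "0 \<noteq> y1/c" "0 \<noteq> y2/c" "y1/c \<noteq> y2/c" by linarith+
    ultimately show ?thesis by simp
  qed
  have two: "card (fixpoints (1-1/M) (2*h+1)) = 2"
  proof -
    define c where "c = 1/M"
    have cc: "1 - (1-1/M) = c" unfolding c_def by simp
    have c0: "0 < c" "c \<le> 1" using Mpos M1 c_def by auto
    have "fixpoints (1-1/M) (2*h+1) = {0, y0/c}"
    proof
      show "{0, y0/c} \<subseteq> fixpoints (1-1/M) (2*h+1)"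
        unfolding fixpoints_Gh cc
        using fix_from_root[OF c0 _ _, of y0] y0 Gh_0 M_def c_def by auto
    next
      show "fixpoints (1-1/M) (2*h+1) \<subseteq> {0, y0/c}"
      proof
        fix x assume "x \<in> fixpoints (1-1/M) (2*h+1)"
        then have x: "0 \<le> x" "x \<le> 1" "Gh h (c*x) = x" unfolding fixpoints_Gh cc by auto
        show "x \<in> {0, y0/c}"
        proof (cases "x = 0")
          case False
          then have x0: "0 < x" using x by simp
          have Hy: "Hp h (c*x) = M" using fix_char[OF c0 x0 x(2)] x(3) c_def by simp
          have cx: "0 \<le> c*x" "c*x \<le> 1" using c0 x0 x by (auto intro: mult_le_one)
          have "c*x = y0" using strict[OF cx] Hy by auto
          then show ?thesis using c0 by (auto simp: field_simps)
        qed simp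
      qed
    qed
    moreover have "0 < y0/c" using y0 c0 by simp
    then have "0 \<noteq> y0/c" by linarith
    ultimately show ?thesis by simp
  qed
  have zero: "fixpoints p (2*h+1) = {0}" if p: "1-1/M < p" "p \<le> 1" for p
  proof
    show "{0} \<subseteq> fixpoints p (2*h+1)" unfolding fixpoints_Gh using Gh_0 by simp
  next
    show "fixpoints p (2*h+1) \<subseteq> {0}"
    proof
      fix x assume "x \<in> fixpoints p (2*h+1)"
      then have x: "0 \<le> x" "x \<le> 1" "Gh h ((1-p)*x) = x" unfolding fixpoints_Gh by auto
      have "1/M < 1" using M1 by simp
      then have c1: "1-p \<le> 1" using p by linarith
      have c: "0 \<le> 1-p" "(1-p) * M < 1" using p Mpos by (auto simp: field_simps)
      show "x \<in> {0}"
      proof (rule ccontr)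
        assume "x \<notin> {0}"
        then have x0: "0 < x" using x by simp
        have "(1-p)*x \<in> {0..1}" using c c1 x by (auto intro: mult_le_one)
        then have "Gh h ((1-p)*x) \<le> M * ((1-p)*x)" using GM by blast
        also have "\<dots> = ((1-p)*M) * x" by simp
        also have "\<dots> < x" using c x0 by simp
        finally show False using x by simp
      qed
    qed
  qed
  show ?thesis using that[OF M98 M2 GM] three two zero by blast
qed

lemma p_star_char:
  assumes h: "h \<ge> 1"
  obtains M where "9/8 \<le> M" "M < 2" "\<forall>y\<in>{0..1}. Gh h y \<le> M*y" "p_star (2*h+1) = 1 - 1/M"
proof -
  obtain M where M: "9/8 \<le> M" "M < 2" "\<forall>y\<in>{0..1}. Gh h y \<le> M*y"
    and three: "\<forall>p. 0 \<le> p \<and> p < 1-1/M \<longrightarrow> card (fixpoints p (2*h+1)) = 3"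
    and two: "card (fixpoints (1-1/M) (2*h+1)) = 2"
    and zero: "\<forall>p. 1-1/M < p \<and> p \<le> 1 \<longrightarrow> fixpoints p (2*h+1) = {0}"
    using fix_analysis[OF h] by blast
  define P where "P = (\<lambda>q. 1/9 \<le> q \<and> q < 1/2 \<and>
       (\<forall>p. 0 \<le> p \<and> p < q \<longrightarrow> card (fixpoints p (2*h+1)) = 3) \<and>
       card (fixpoints q (2*h+1)) = 2 \<and>
       (\<forall>p. q < p \<and> p \<le> 1 \<longrightarrow> fixpoints p (2*h+1) = {0}))"
  have q1: "1/9 \<le> 1-1/M" using M(1) by (simp add: field_simps)
  have q2: "1-1/M < 1/2" using M(1,2) by (simp add: field_simps)
  have P0: "P (1-1/M)" unfolding P_def using q1 q2 three two zero by blast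
  have uniq: "q = 1-1/M" if "P q" for q
  proof (rule ccontr)
    assume ne: "q \<noteq> 1-1/M"
    from that have q: "1/9 \<le> q" "q < 1/2" "\<forall>p. 0 \<le> p \<and> p < q \<longrightarrow> card (fixpoints p (2*h+1)) = 3"
      "card (fixpoints q (2*h+1)) = 2" unfolding P_def by auto
    show False
    proof (cases "q < 1-1/M")
      case True
      then have "card (fixpoints q (2*h+1)) = 3" using three q(1) by auto
      then show False using q(4) by simp
    next
      case False
      then have "1-1/M < q" using ne by simp
      then have "card (fixpoints (1-1/M) (2*h+1)) = 3" using q(3) q1 by auto
      then show False using two by simp
    qed
  qed
  have "p_star (2*h+1) = (THE q. P q)" unfolding p_star_def P_def by simp
  also have "\<dots> = 1-1/M" using P0 uniq by (rule the_equality)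
  finally show ?thesis using that M by blast
qed




lemma finite_nbrs: "finite (nbrs G n u)"
  unfolding nbrs_def verts_def by simp

lemma nbrs_sub: "nbrs G n u \<subseteq> verts n"
  unfolding nbrs_def by auto

lemma phi_range: "0 \<le> phi G n \<sigma> u" "phi G n \<sigma> u \<le> 1"
proof -
  show "0 \<le> phi G n \<sigma> u" unfolding phi_def by simp
  have "card (nbrs G n u \<inter> {v. \<sigma> v}) \<le> card (nbrs G n u)"
    by (intro card_mono finite_nbrs) auto
  then show "phi G n \<sigma> u \<le> 1" unfolding phi_def deg_def
    by (cases "card (nbrs G n u) = 0") (auto simp: field_simps)
qed

lemma sample_view_eq:
  assumes N: "nbrs G n u \<noteq> {}" and p: "0 \<le> p" "p \<le> 1"
  shows "sample_view G n p \<sigma> u = bernoulli_pmf ((1-p) * phi G n \<sigma> u)"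
proof -
  let ?N = "nbrs G n u"
  have inner: "pmf (bernoulli_pmf p \<bind> (\<lambda>b. return_pmf (if b then False else \<sigma> v))) True
      = (if \<sigma> v then 1 - p else 0)" for v
    using p by (simp add: pmf_bind)
  have sum: "(\<Sum>v\<in>?N. (if \<sigma> v then 1 - p else 0)) = (1-p) * real (card (?N \<inter> {v. \<sigma> v}))"
  proof -
    have "(\<Sum>v\<in>?N. (if \<sigma> v then 1 - p else 0)) = (\<Sum>v\<in>{v\<in>?N. \<sigma> v}. 1 - p)"
      using sum.inter_filter[OF finite_nbrs[of G n u], where g="\<lambda>_. 1-p" and P=\<sigma>] by simp
    also have "{v\<in>?N. \<sigma> v} = ?N \<inter> {v. \<sigma> v}" by auto
    finally show ?thesis by simp
  qed
  have T: "pmf (sample_view G n p \<sigma> u) True = (1-p) * phi G n \<sigma> u"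
    unfolding sample_view_def
    using N finite_nbrs
    by (simp add: pmf_bind_pmf_of_set inner sum phi_def deg_def)
  have q: "0 \<le> (1-p) * phi G n \<sigma> u" "(1-p) * phi G n \<sigma> u \<le> 1"
    using p phi_range[of G n \<sigma> u] by (auto intro: mult_le_one)
  show ?thesis
  proof (rule pmf_eqI)
    fix b show "pmf (sample_view G n p \<sigma> u) b = pmf (bernoulli_pmf ((1-p) * phi G n \<sigma> u)) b"
      using T q by (cases b) (simp_all add: pmf_False_conv_True)
  qed
qed

lemma count_list_bool: "count_list xs True + count_list xs False = length xs"
  by (induction xs) auto

lemma count_list_True: "count_list xs True = length (filter id xs)"
  by (induction xs) auto

lemma node_update_eq:
  assumes N: "nbrs G n u \<noteq> {}" and p: "0 \<le> p" "p \<le> 1" and k: "k = 2*h+1"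
  shows "pmf (node_update G n k p \<sigma> u) True = Gh h ((1-p) * phi G n \<sigma> u)"
proof -
  define q where "q = (1-p) * phi G n \<sigma> u"
  have q: "0 \<le> q" "q \<le> 1"
    using p phi_range[of G n \<sigma> u] by (auto intro: mult_le_one simp: q_def)
  define R where "R = replicate_pmf k (bernoulli_pmf q)"
  have "node_update G n k p \<sigma> u = map_pmf (\<lambda>views. count_list views True > count_list views False) R"
    unfolding node_update_def R_def sample_view_eq[OF N p] q_def map_pmf_def by simp
  also have "\<dots> = map_pmf (\<lambda>i. h+1 \<le> i) (map_pmf (length \<circ> filter id) R)"
    unfolding pmf.map_comp
  proof (rule pmf.map_cong[OF refl])
    fix xs assume "xs \<in> set_pmf R"
    then have "length xs = k" unfolding R_def by (simp add: set_replicate_pmf)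
    then show "(count_list xs True > count_list xs False) = ((\<lambda>i. h+1 \<le> i) \<circ> (length \<circ> filter id)) xs"
      using count_list_bool[of xs] count_list_True[of xs] k by auto
  qed
  also have "map_pmf (length \<circ> filter id) R = binomial_pmf k q"
    unfolding R_def using q by (simp add: binomial_pmf_altdef)
  finally have eq: "node_update G n k p \<sigma> u = map_pmf (\<lambda>i. h+1 \<le> i) (binomial_pmf k q)" .
  have "pmf (node_update G n k p \<sigma> u) True = measure_pmf.prob (binomial_pmf k q) {i. h+1 \<le> i}"
    unfolding eq pmf_map by (simp add: vimage_def)
  also have "\<dots> = measure_pmf.prob (binomial_pmf k q) {h+1..k}"
  proof -
    have "set_pmf (binomial_pmf k q) \<subseteq> {..k}" using q by (auto simp: set_pmf_binomial_eq)
    then have "{i. h+1 \<le> i} \<inter> set_pmf (binomial_pmf k q) = {h+1..k} \<inter> set_pmf (binomial_pmf k q)"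
      by auto
    then show ?thesis by (metis measure_Int_set_pmf)
  qed
  also have "\<dots> = (\<Sum>i=h+1..k. pmf (binomial_pmf k q) i)"
    by (simp add: measure_measure_pmf_finite)
  also have "\<dots> = Gh h q"
    unfolding Gh_def k using q by (simp add: Bernstein_def)
  finally show ?thesis unfolding q_def .
qed

lemma expectation_bool_pmf: "measure_pmf.expectation q (\<lambda>b. if b then 1 else 0 :: real) = pmf q True"
proof -
  have "measure_pmf.expectation q (\<lambda>b. if b then 1 else 0 :: real) = (\<Sum>a\<in>{True}. (if a then 1 else 0) * pmf q a)"
    by (rule integral_measure_pmf_real) (auto split: if_splits)
  then show ?thesis by simp
qed

lemma sum_indicator_card:
  "(\<Sum>v\<in>nbrs G n u. if \<omega> v then 1 else 0 :: real) = real (card (nbrs G n u \<inter> {v. \<omega> v}))"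
proof -
  have "(\<Sum>v\<in>nbrs G n u. if \<omega> v then 1 else 0 :: real) = (\<Sum>v\<in>{v\<in>nbrs G n u. \<omega> v}. 1)"
    using sum.inter_filter[OF finite_nbrs[of G n u], where g="\<lambda>_. 1::real" and P=\<omega>] by simp
  also have "{v\<in>nbrs G n u. \<omega> v} = nbrs G n u \<inter> {v. \<omega> v}" by auto
  finally show ?thesis by simp
qed

lemma hoeff_node:
  assumes N: "nbrs G n u \<noteq> {}" and p: "0 \<le> p" "p \<le> 1" and k: "k = 2*h+1"
    and GM: "\<forall>y\<in>{0..1}. Gh h y \<le> M*y" and M: "0 \<le> M"
    and bnd: "\<forall>v\<in>verts n. phi G n \<sigma> v \<le> b" and eps: "\<epsilon> > 0"
    and allN: "\<forall>v\<in>verts n. nbrs G n v \<noteq> {}"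
  shows "measure_pmf.prob (em_step G n k p \<sigma>) {\<omega>. phi G n \<omega> u > (1-p)*M*b + \<epsilon>}
           \<le> exp (-2 * \<epsilon>^2 * real (deg G n u))"
proof -
  define P where "P = em_step G n k p \<sigma>"
  define X where "X = (\<lambda>v (\<omega>::nat\<Rightarrow>bool). if \<omega> v then 1 else 0 :: real)"
  define I where "I = nbrs G n u"
  define d where "d = real (card I)"
  have finI: "finite I" unfolding I_def by (rule finite_nbrs)
  have d0: "d > 0" unfolding d_def I_def using N finite_nbrs by (simp add: card_gt_0_iff)
  have finV: "finite (verts n)" unfolding verts_def by simp
  have indep: "prob_space.indep_vars (measure_pmf P) (\<lambda>_. borel) X I"
  proof -
    have i1: "prob_space.indep_vars (measure_pmf P) (\<lambda>_. count_space UNIV) (\<lambda>x f. f x) (verts n)"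
      unfolding P_def em_step_def by (rule indep_vars_Pi_pmf[OF finV])
    have "prob_space.indep_vars (measure_pmf P) (\<lambda>_. borel) (\<lambda>i \<omega>. (\<lambda>b. if b then 1 else 0 :: real) ((\<lambda>x f. f x) i \<omega>)) (verts n)"
      by (rule prob_space.indep_vars_compose2[OF measure_pmf.prob_space_axioms i1]) simp
    then have i2: "prob_space.indep_vars (measure_pmf P) (\<lambda>_. borel) X (verts n)"
      unfolding X_def by simp
    show ?thesis unfolding I_def
      by (rule prob_space.indep_vars_subset[OF measure_pmf.prob_space_axioms i2 nbrs_sub])
  qed
  define \<mu> where "\<mu> = (\<Sum>i\<in>I. measure_pmf.expectation P (X i))"
  interpret Hoeffding_ineq "measure_pmf P" I X "\<lambda>_. 0" "\<lambda>_. 1" \<mu>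
  proof unfold_locales
    show "finite I" by (rule finI)
    show "prob_space.indep_vars (measure_pmf P) (\<lambda>_. borel) X I" by (rule indep)
    show "AE x in measure_pmf P. X i x \<in> {0..1}" for i unfolding X_def by simp
    show "\<mu> \<equiv> \<Sum>i\<in>I. measure_pmf.expectation P (X i)" unfolding \<mu>_def by simp
  qed
  have EX: "measure_pmf.expectation P (X v) = Gh h ((1-p) * phi G n \<sigma> v)" if v: "v \<in> I" for v
  proof -
    have vV: "v \<in> verts n" using v nbrs_sub unfolding I_def by blast
    have Nv: "nbrs G n v \<noteq> {}" using allN vV by blast
    have "measure_pmf.expectation P (X v) = measure_pmf.expectation (map_pmf (\<lambda>f. f v) P) (\<lambda>b. if b then 1 else 0 :: real)"
      unfolding X_def by simp
    also have "map_pmf (\<lambda>f. f v) P = node_update G n k p \<sigma> v"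
      unfolding P_def em_step_def using Pi_pmf_component[OF finV, of v False "node_update G n k p \<sigma>"] vV by simp
    finally show ?thesis using expectation_bool_pmf node_update_eq[OF Nv p k] by simp
  qed
  have c: "0 \<le> 1-p" "1-p \<le> 1" using p by auto
  have mu_le: "\<mu> \<le> d * ((1-p)*M*b)"
  proof -
    have "\<mu> = (\<Sum>v\<in>I. Gh h ((1-p) * phi G n \<sigma> v))" unfolding \<mu>_def using EX by simp
    also have "\<dots> \<le> (\<Sum>v\<in>I. (1-p)*M*b)"
    proof (rule sum_mono)
      fix v assume v: "v \<in> I"
      have vV: "v \<in> verts n" using v nbrs_sub unfolding I_def by blast
      have r: "(1-p) * phi G n \<sigma> v \<in> {0..1}" using c phi_range[of G n \<sigma> v] by (auto intro: mult_le_one)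
      have "Gh h ((1-p) * phi G n \<sigma> v) \<le> M * ((1-p) * phi G n \<sigma> v)" using GM r by blast
      also have "\<dots> = (M*(1-p)) * phi G n \<sigma> v" by simp
      also have "\<dots> \<le> (M*(1-p)) * b" using bnd vV M c by (intro mult_left_mono) auto
      finally show "Gh h ((1-p) * phi G n \<sigma> v) \<le> (1-p)*M*b" by (simp add: mult_ac)
    qed
    also have "\<dots> = d * ((1-p)*M*b)" unfolding d_def by simp
    finally show ?thesis .
  qed
  have sq: "(\<Sum>i\<in>I. ((\<lambda>_. 1::real) i - (\<lambda>_. 0) i)\<^sup>2) = d" unfolding d_def by simp
  have H: "measure_pmf.prob P {x\<in>space (measure_pmf P). (\<Sum>i\<in>I. X i x) \<ge> \<mu> + \<epsilon>*d}
      \<le> exp (-2 * (\<epsilon>*d)\<^sup>2 / (\<Sum>i\<in>I. ((\<lambda>_. 1::real) i - (\<lambda>_. 0) i)\<^sup>2))"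
    by (rule Hoeffding_ineq_ge) (use eps d0 sq in auto)
  have ex: "exp (-2 * (\<epsilon>*d)\<^sup>2 / (\<Sum>i\<in>I. ((\<lambda>_. 1::real) i - (\<lambda>_. 0) i)\<^sup>2)) = exp (-2 * \<epsilon>^2 * d)"
    unfolding sq using d0 by (simp add: power2_eq_square field_simps)
  have sub: "{\<omega>. phi G n \<omega> u > (1-p)*M*b + \<epsilon>} \<subseteq> {x\<in>space (measure_pmf P). (\<Sum>i\<in>I. X i x) \<ge> \<mu> + \<epsilon>*d}"
  proof
    fix \<omega> assume "\<omega> \<in> {\<omega>. phi G n \<omega> u > (1-p)*M*b + \<epsilon>}"
    then have gt: "phi G n \<omega> u > (1-p)*M*b + \<epsilon>" by simp
    have sX: "(\<Sum>i\<in>I. X i \<omega>) = d * phi G n \<omega> u"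
      unfolding X_def I_def sum_indicator_card d_def phi_def deg_def using d0 unfolding d_def I_def by simp
    have "d * ((1-p)*M*b + \<epsilon>) < d * phi G n \<omega> u" using gt d0 by simp
    then have "\<mu> + \<epsilon>*d \<le> (\<Sum>i\<in>I. X i \<omega>)" using mu_le sX by (simp add: algebra_simps)
    then show "\<omega> \<in> {x\<in>space (measure_pmf P). (\<Sum>i\<in>I. X i x) \<ge> \<mu> + \<epsilon>*d}" by simp
  qed
  have "measure_pmf.prob P {\<omega>. phi G n \<omega> u > (1-p)*M*b + \<epsilon>}
     \<le> measure_pmf.prob P {x\<in>space (measure_pmf P). (\<Sum>i\<in>I. X i x) \<ge> \<mu> + \<epsilon>*d}"
    by (rule measure_pmf.finite_measure_mono[OF sub]) simp
  also have "\<dots> \<le> exp (-2 * \<epsilon>^2 * d)" using H ex by simp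
  finally show ?thesis unfolding P_def d_def I_def deg_def .
qed

lemma finite_verts: "finite (verts n)" and card_verts: "card (verts n) = n"
  unfolding verts_def by simp_all

lemma verts_ne: "n \<ge> 1 \<Longrightarrow> verts n \<noteq> {}"
  unfolding verts_def by auto

lemma min_deg_le: "u \<in> verts n \<Longrightarrow> min_deg G n \<le> deg G n u"
  unfolding min_deg_def using finite_verts by (intro Min_le) auto

lemma phi_le_max: "u \<in> verts n \<Longrightarrow> phi G n \<sigma> u \<le> phi_max G n \<sigma>"
  unfolding phi_max_def using finite_verts by (intro Max_ge) auto

lemma phi_max_le: "n \<ge> 1 \<Longrightarrow> (\<forall>u\<in>verts n. phi G n \<sigma> u \<le> t) \<Longrightarrow> phi_max G n \<sigma> \<le> t"
  unfolding phi_max_def using finite_verts verts_ne by (subst Max_le_iff) auto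

lemma hoeff_all:
  assumes p: "0 \<le> p" "p \<le> 1" and k: "k = 2*h+1"
    and GM: "\<forall>y\<in>{0..1}. Gh h y \<le> M*y" and M: "0 \<le> M"
    and bnd: "phi_max G n \<sigma> \<le> b" and eps: "\<epsilon> > 0"
    and allN: "\<forall>v\<in>verts n. nbrs G n v \<noteq> {}" and n1: "n \<ge> 1"
  shows "measure_pmf.prob (em_step G n k p \<sigma>) {\<omega>. phi_max G n \<omega> > (1-p)*M*b + \<epsilon>}
           \<le> real n * exp (-2 * \<epsilon>^2 * real (min_deg G n))"
proof -
  let ?t = "(1-p)*M*b + \<epsilon>"
  let ?P = "em_step G n k p \<sigma>"
  have bnd': "\<forall>v\<in>verts n. phi G n \<sigma> v \<le> b" using bnd phi_le_max by (meson order_trans)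
  have "{\<omega>. phi_max G n \<omega> > ?t} \<subseteq> (\<Union>u\<in>verts n. {\<omega>. phi G n \<omega> u > ?t})"
  proof
    fix \<omega> assume "\<omega> \<in> {\<omega>. phi_max G n \<omega> > ?t}"
    then have "\<not> (\<forall>u\<in>verts n. phi G n \<omega> u \<le> ?t)" using phi_max_le[OF n1] by force
    then show "\<omega> \<in> (\<Union>u\<in>verts n. {\<omega>. phi G n \<omega> u > ?t})" by (auto simp: not_le)
  qed
  then have "measure_pmf.prob ?P {\<omega>. phi_max G n \<omega> > ?t} \<le> measure_pmf.prob ?P (\<Union>u\<in>verts n. {\<omega>. phi G n \<omega> u > ?t})"
    by (intro measure_pmf.finite_measure_mono) auto
  also have "\<dots> \<le> (\<Sum>u\<in>verts n. measure_pmf.prob ?P {\<omega>. phi G n \<omega> u > ?t})"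
    by (intro measure_pmf.finite_measure_subadditive_finite finite_verts) auto
  also have "\<dots> \<le> (\<Sum>u\<in>verts n. exp (-2 * \<epsilon>^2 * real (min_deg G n)))"
  proof (rule sum_mono)
    fix u assume u: "u \<in> verts n"
    have "measure_pmf.prob ?P {\<omega>. phi G n \<omega> u > ?t} \<le> exp (-2 * \<epsilon>^2 * real (deg G n u))"
      using allN u by (intro hoeff_node[OF _ p k GM M bnd' eps allN]) auto
    also have "\<dots> \<le> exp (-2 * \<epsilon>^2 * real (min_deg G n))"
      using min_deg_le[OF u, of G] eps by (simp add: mult_left_mono)
    finally show "measure_pmf.prob ?P {\<omega>. phi G n \<omega> u > ?t} \<le> exp (-2 * \<epsilon>^2 * real (min_deg G n))" .
  qed
  also have "\<dots> = real n * exp (-2 * \<epsilon>^2 * real (min_deg G n))" by (simp add: card_verts)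
  finally show ?thesis .
qed

lemma prob_bind_le:
  assumes le: "\<And>x. x \<in> set_pmf M \<Longrightarrow> x \<notin> B \<Longrightarrow> measure_pmf.prob (N x) A \<le> e" and e: "0 \<le> e"
  shows "measure_pmf.prob (bind_pmf M N) A \<le> measure_pmf.prob M B + e"
proof -
  have "emeasure (measure_pmf (bind_pmf M N)) A = (\<integral>\<^sup>+x. emeasure (measure_pmf (N x)) A \<partial>measure_pmf M)"
    by simp
  also have "\<dots> \<le> (\<integral>\<^sup>+x. (indicator B x + ennreal e) \<partial>measure_pmf M)"
  proof (rule nn_integral_mono_AE)
    show "AE x in measure_pmf M. emeasure (measure_pmf (N x)) A \<le> indicator B x + ennreal e"
      using AE_measure_pmf[of M]
    proof (rule eventually_mono)
      fix x assume x: "x \<in> set_pmf M"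
      show "emeasure (measure_pmf (N x)) A \<le> indicator B x + ennreal e"
      proof (cases "x \<in> B")
        case True
        have "emeasure (measure_pmf (N x)) A \<le> 1" by (rule measure_pmf.emeasure_le_1)
        also have "\<dots> \<le> indicator B x + ennreal e" using True by simp
        finally show ?thesis .
      next
        case False
        have "emeasure (measure_pmf (N x)) A = ennreal (measure_pmf.prob (N x) A)"
          by (simp add: measure_pmf.emeasure_eq_measure)
        also have "\<dots> \<le> ennreal e" using le[OF x False] by (simp add: ennreal_leI)
        also have "\<dots> \<le> indicator B x + ennreal e" by simp
        finally show ?thesis .
      qed
    qed
  qed
  also have "\<dots> = (\<integral>\<^sup>+x. indicator B x \<partial>measure_pmf M) + (\<integral>\<^sup>+x. ennreal e \<partial>measure_pmf M)"
    by (rule nn_integral_add) auto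
  also have "\<dots> = emeasure (measure_pmf M) B + ennreal e"
    by (simp add: measure_pmf.emeasure_space_1)
  also have "\<dots> = ennreal (measure_pmf.prob M B + e)"
    using e by (simp add: measure_pmf.emeasure_eq_measure ennreal_plus)
  finally have "ennreal (measure_pmf.prob (bind_pmf M N) A) \<le> ennreal (measure_pmf.prob M B + e)"
    by (simp only: measure_pmf.emeasure_eq_measure)
  then show ?thesis using e by (subst (asm) ennreal_le_iff) auto
qed

lemma traj_len: "xs \<in> set_pmf (em_traj G n k p t) \<Longrightarrow> length xs = Suc t"
  by (induction t arbitrary: xs) auto

lemma phi_max_le1: "n \<ge> 1 \<Longrightarrow> phi_max G n \<sigma> \<le> 1"
  using phi_max_le[of n G \<sigma> 1] phi_range by blast

lemma traj_bound:
  assumes p: "0 \<le> p" "p \<le> 1" and k: "k = 2*h+1"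
    and GM: "\<forall>y\<in>{0..1}. Gh h y \<le> M*y" and M: "0 \<le> M" and eps: "\<epsilon> > 0"
    and allN: "\<forall>v\<in>verts n. nbrs G n v \<noteq> {}" and n1: "n \<ge> 1"
    and B0: "1 \<le> Bf 0" and Bs: "\<And>t. (1-p)*M*Bf t + \<epsilon> \<le> Bf (Suc t)"
  shows "measure_pmf.prob (em_traj G n k p t) {xs. phi_max G n (last xs) > Bf t}
           \<le> real t * (real n * exp (-2 * \<epsilon>^2 * real (min_deg G n)))"
proof (induction t)
  case 0
  have "phi_max G n (\<lambda>u. u \<in> verts n) \<le> Bf 0" using phi_max_le1[OF n1] B0 by (meson order_trans)
  then have "{xs. phi_max G n (last xs) > Bf 0} \<inter> set_pmf (em_traj G n k p 0) = {}" by auto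
  then have "measure_pmf.prob (em_traj G n k p 0) {xs. phi_max G n (last xs) > Bf 0} = 0"
    by (metis measure_Int_set_pmf measure_empty)
  then show ?case by simp
next
  case (Suc t)
  let ?e = "real n * exp (-2 * \<epsilon>^2 * real (min_deg G n))"
  have e0: "0 \<le> ?e" by simp
  have "em_traj G n k p (Suc t) = em_traj G n k p t \<bind> (\<lambda>xs. map_pmf (\<lambda>\<sigma>. xs @ [\<sigma>]) (em_step G n k p (last xs)))"
    by (simp add: map_pmf_def)
  then have "measure_pmf.prob (em_traj G n k p (Suc t)) {xs. phi_max G n (last xs) > Bf (Suc t)}
      \<le> measure_pmf.prob (em_traj G n k p t) {xs. phi_max G n (last xs) > Bf t} + ?e"
  proof (simp only:, intro prob_bind_le e0)
    fix xs assume "xs \<notin> {xs. phi_max G n (last xs) > Bf t}"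
    then have b: "phi_max G n (last xs) \<le> Bf t" by simp
    have "measure_pmf.prob (map_pmf (\<lambda>\<sigma>. xs @ [\<sigma>]) (em_step G n k p (last xs))) {xs. phi_max G n (last xs) > Bf (Suc t)}
        = measure_pmf.prob (em_step G n k p (last xs)) {\<sigma>. phi_max G n \<sigma> > Bf (Suc t)}"
      by (simp add: measure_map_pmf vimage_def)
    also have "\<dots> \<le> measure_pmf.prob (em_step G n k p (last xs)) {\<sigma>. phi_max G n \<sigma> > (1-p)*M*Bf t + \<epsilon>}"
      using Bs[of t] by (intro measure_pmf.finite_measure_mono) auto
    also have "\<dots> \<le> ?e" by (rule hoeff_all[OF p k GM M b eps allN n1])
    finally show "measure_pmf.prob (map_pmf (\<lambda>\<sigma>. xs @ [\<sigma>]) (em_step G n k p (last xs))) {xs. phi_max G n (last xs) > Bf (Suc t)} \<le> ?e" .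
  qed
  also have "\<dots> \<le> real t * ?e + ?e" using Suc by simp
  finally show ?case by (simp add: algebra_simps)
qed

lemma n_exp_bound:
  assumes n: "n \<ge> 2" and eps: "\<epsilon> > 0" and d: "1/\<epsilon>^2 \<le> real d / ln (real n)"
  shows "real n * exp (-2 * \<epsilon>^2 * real d) \<le> 1 / real n" and "d > 0"
proof -
  have ln0: "ln (real n) > 0" using n by simp
  have "ln (real n) / \<epsilon>^2 \<le> real d" using d ln0 eps by (simp add: field_simps)
  then have dd: "ln (real n) \<le> \<epsilon>^2 * real d" using eps by (simp add: field_simps)
  then show "d > 0" using ln0 eps by (cases "d = 0") auto
  have "exp (-2 * \<epsilon>^2 * real d) \<le> exp (-2 * ln (real n))"
    unfolding exp_le_cancel_iff using dd by linarith
  also have "exp (-2 * ln (real n)) = 1 / (real n * real n)"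
  proof -
    have "exp (2 * ln (real n)) = exp (ln (real n)) * exp (ln (real n))"
      by (simp only: mult_2 exp_add)
    also have "\<dots> = real n * real n" using n by simp
    finally have e: "exp (2 * ln (real n)) = real n * real n" .
    have "exp (-2 * ln (real n)) = inverse (exp (2 * ln (real n)))"
      by (simp only: exp_minus[symmetric] mult_minus_left)
    then show ?thesis using e by (simp add: divide_inverse)
  qed
  finally have E: "exp (-2 * \<epsilon>^2 * real d) \<le> 1 / (real n * real n)" .
  have "real n * exp (-2 * \<epsilon>^2 * real d) \<le> real n * (1 / (real n * real n))"
    by (rule mult_left_mono[OF E]) simp
  also have "real n * (1 / (real n * real n)) = 1 / real n" using n by simp
  finally show "real n * exp (-2 * \<epsilon>^2 * real d) \<le> 1 / real n" .
qed

theorem proposition5p7: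
  fixes k :: nat and p :: real
  assumes "odd k" and "k \<ge> 3"
    and "p_star k < p" and "p \<le> 1"
  shows "\<forall>\<gamma>>0. \<exists>T::nat. \<forall>G. simple_graph_seq G \<and>
            filterlim (\<lambda>n. real (min_deg G n) / ln (real n)) at_top sequentially \<longrightarrow>
            ((\<lambda>n. measure_pmf.prob (em_traj G n k p T)
                    {xs. \<exists>t\<le>T. phi_max G n (xs ! t) \<le> \<gamma>}) \<longlonglongrightarrow> 1)"
proof (intro allI impI)
  fix \<gamma> :: real assume g: "\<gamma> > 0"
  obtain h where k: "k = 2*h+1" using assms(1) oddE by blast
  have h1: "h \<ge> 1" using assms(2) k by simp
  obtain M where M: "9/8 \<le> M" "M < 2" and GM: "\<forall>y\<in>{0..1}. Gh h y \<le> M*y"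
    and ps: "p_star (2*h+1) = 1 - 1/M"
    using p_star_char[OF h1] by blast
  have pM: "1 - 1/M < p" using assms(3) ps k by simp
  have M0: "0 \<le> M" using M by simp
  have "1/M < 1" using M by simp
  then have p0: "0 \<le> p" using pM by linarith
  have p: "0 \<le> p" "p \<le> 1" using p0 assms(4) by auto
  define \<rho> where "\<rho> = (1-p)*M"
  have \<rho>0: "0 \<le> \<rho>" unfolding \<rho>_def using p M0 by simp
  have \<rho>1: "\<rho> < 1" unfolding \<rho>_def using pM M by (simp add: field_simps)
  define r where "r = (1+\<rho>)/2"
  have r: "0 \<le> r" "r < 1" unfolding r_def using \<rho>0 \<rho>1 by auto
  define \<epsilon> where "\<epsilon> = (1-\<rho>)*\<gamma>/2"
  have eps: "\<epsilon> > 0" unfolding \<epsilon>_def using \<rho>1 g by simp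
  obtain T where T: "r^T < \<gamma>" using real_arch_pow_inv[OF g r(2)] by blast
  define Bf where "Bf = (\<lambda>t. max \<gamma> (r^t))"
  have B0: "1 \<le> Bf 0" unfolding Bf_def by simp
  have Bs: "(1-p)*M*Bf t + \<epsilon> \<le> Bf (Suc t)" for t
  proof -
    have "(1-p)*M*Bf t + \<epsilon> = \<rho> * Bf t + \<epsilon>" unfolding \<rho>_def by simp
    also have "\<dots> \<le> \<rho> * Bf t + (1-\<rho>) * Bf t / 2"
      unfolding \<epsilon>_def Bf_def using \<rho>1 by (intro add_left_mono divide_right_mono mult_left_mono) auto
    also have "\<dots> = r * Bf t" unfolding r_def by (simp add: field_simps)
    also have "\<dots> = max (r*\<gamma>) (r^Suc t)" unfolding Bf_def using r by (simp add: max_mult_distrib_left)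
    also have "\<dots> \<le> Bf (Suc t)" unfolding Bf_def using r g
      by (intro max.mono) (auto simp: mult_left_le_one_le)
    finally show ?thesis .
  qed
  have BT: "Bf T = \<gamma>" unfolding Bf_def using T by simp
  show "\<exists>T::nat. \<forall>G. simple_graph_seq G \<and>
            filterlim (\<lambda>n. real (min_deg G n) / ln (real n)) at_top sequentially \<longrightarrow>
            ((\<lambda>n. measure_pmf.prob (em_traj G n k p T)
                    {xs. \<exists>t\<le>T. phi_max G n (xs ! t) \<le> \<gamma>}) \<longlonglongrightarrow> 1)"
  proof (intro exI allI impI)
    fix G assume "simple_graph_seq G \<and> filterlim (\<lambda>n. real (min_deg G n) / ln (real n)) at_top sequentially"
    then have lim: "filterlim (\<lambda>n. real (min_deg G n) / ln (real n)) at_top sequentially" by simp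
    define A where "A = (\<lambda>n. {xs. \<exists>t\<le>T. phi_max G n (xs ! t) \<le> \<gamma>})"
    have ev1: "eventually (\<lambda>n. 1/\<epsilon>^2 \<le> real (min_deg G n) / ln (real n)) sequentially"
      using lim unfolding filterlim_at_top by blast
    have ev2: "eventually (\<lambda>n::nat. n \<ge> 2) sequentially" by (rule eventually_ge_at_top)
    have low: "eventually (\<lambda>n. 1 - real T / real n \<le> measure_pmf.prob (em_traj G n k p T) (A n)) sequentially"
      using ev1 ev2
    proof eventually_elim
      case (elim n)
      have eb: "real n * exp (-2 * \<epsilon>^2 * real (min_deg G n)) \<le> 1 / real n"
        and dpos: "min_deg G n > 0" using n_exp_bound[OF elim(2) eps elim(1)] by auto
      have n1: "n \<ge> 1" using elim by simp
      have allN: "\<forall>v\<in>verts n. nbrs G n v \<noteq> {}"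
      proof
        fix v assume "v \<in> verts n"
        then have "deg G n v > 0" using min_deg_le[of v n G] dpos by simp
        then show "nbrs G n v \<noteq> {}" unfolding deg_def by auto
      qed
      define bad where "bad = {xs. phi_max G n (last xs) > Bf T}"
      have pb: "measure_pmf.prob (em_traj G n k p T) bad \<le> real T * (real n * exp (-2 * \<epsilon>^2 * real (min_deg G n)))"
        unfolding bad_def by (rule traj_bound[OF p k GM M0 eps allN n1 B0 Bs])
      also have "\<dots> \<le> real T * (1 / real n)" by (rule mult_left_mono[OF eb]) simp
      finally have pb': "measure_pmf.prob (em_traj G n k p T) bad \<le> real T / real n" by simp
      have "measure_pmf.prob (em_traj G n k p T) (A n \<union> bad) = 1"
      proof (subst measure_pmf.prob_eq_1)
        show "AE x in measure_pmf (em_traj G n k p T). x \<in> A n \<union> bad"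
        proof (rule AE_pmfI)
          fix xs assume xs: "xs \<in> set_pmf (em_traj G n k p T)"
          then have len: "length xs = Suc T" by (rule traj_len)
          then have ne: "xs \<noteq> []" by auto
          have "last xs = xs ! T" using last_conv_nth[OF ne] len by simp
          then show "xs \<in> A n \<union> bad" unfolding A_def bad_def BT by force
        qed
      qed simp
      then have "1 \<le> measure_pmf.prob (em_traj G n k p T) (A n) + measure_pmf.prob (em_traj G n k p T) bad"
      proof -
        have "measure_pmf.prob (em_traj G n k p T) (A n \<union> bad) \<le> measure_pmf.prob (em_traj G n k p T) (A n) + measure_pmf.prob (em_traj G n k p T) bad"
          by (intro measure_Un_le) auto
        then show ?thesis using \<open>measure_pmf.prob (em_traj G n k p T) (A n \<union> bad) = 1\<close> by simp
      qed
      then show ?case using pb' by simp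
    qed
    have up: "eventually (\<lambda>n. measure_pmf.prob (em_traj G n k p T) (A n) \<le> 1) sequentially"
      by simp
    have "(\<lambda>n. 1 - real T / real n) \<longlonglongrightarrow> 1 - 0"
      by (intro tendsto_diff tendsto_const lim_const_over_n)
    then have l1: "(\<lambda>n. 1 - real T / real n) \<longlonglongrightarrow> 1" by simp
    have "(\<lambda>n. measure_pmf.prob (em_traj G n k p T) (A n)) \<longlonglongrightarrow> 1"
      by (rule tendsto_sandwich[OF low up l1 tendsto_const])
    then show "(\<lambda>n. measure_pmf.prob (em_traj G n k p T) {xs. \<exists>t\<le>T. phi_max G n (xs ! t) \<le> \<gamma>}) \<longlonglongrightarrow> 1"
      unfolding A_def .
  qed
qed


end
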